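(* Let $\mathcal{P}_1,\mathcal{P}_2$ be finite posets with $p_j=|\mathcal{P}_j|$, and for $j=1,2$ let $\mathbf{V}_j\in\mathbb{R}^{p_j\times q_j}$ be a fixed matrix whose columns are the $q_j$ extremal rays of $\mathcal{C}(\mathcal{P}_j)$ (one representative vector per ray). Then for every matrix $\mathbf{T}\in\mathcal{N}_{<\infty}$, the nondecreasing rank of $\mathbf{T}$ equals the smallest nonnegative rank of a matrix $\mathbf{H}\in\mathbb{R}^{q_1\times q_2}$ with nonnegative entries satisfying $\mathbf{T}=\mathbf{V}_1\mathbf{H}\mathbf{V}_2^\intercal$.
   Context: For a finite poset $\mathcal{Q}$, the order cone $\mathcal{C}(\mathcal{Q})$ is the set of $\mathbf{f}\in\mathbb{R}^{\mathcal{Q}}$ with $f_x\ge0$ for all $x$ and $f_x\le f_y$ whenever $x\preceq y$; it is a polyhedral cone with finitely many extremal rays (one-dimensional faces). $\mathcal{N}_{<\infty}$ is the set of matrices $\mathbf{T}=\sum_{i=1}^r\mathbf{a}_i\mathbf{b}_i^\intercal$ (finite $r$) with $\mathbf{a}_i\in\mathcal{C}(\mathcal{P}_1)$, $\mathbf{b}_i\in\mathcal{C}(\mathcal{P}_2)$, and the nondecreasing rank is the minimal such $r$. The nonnegative rank of a nonnegative matrix $\mathbf{H}$ is the minimal $r$ with $\mathbf{H}=\sum_{i=1}^r\mathbf{c}_i\mathbf{d}_i^\intercal$, $\mathbf{c}_i,\mathbf{d}_i$ entrywise nonnegative. *)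

theory Defs
  imports "HOL-Analysis.Analysis"
begin

text \<open>A finite poset is modelled as a finite type with a partial order;
  vectors in R^P are elements of real^'a.\<close>

definition order_cone :: "(real ^ 'a::{finite,order}) set" where
  "order_cone = {f. (\<forall>x. 0 \<le> f $ x) \<and> (\<forall>x y. x \<le> y \<longrightarrow> f $ x \<le> f $ y)}"

definition extremal_rays :: "(real ^ 'a::{finite,order}) set set" where
  "extremal_rays = {F. F face_of (order_cone :: (real ^ 'a::{finite,order}) set) \<and> aff_dim F = 1}"

definition ray_of :: "'v::real_vector \<Rightarrow> 'v set" where
  "ray_of v = {c *\<^sub>R v | c. 0 \<le> c}"

definition outer :: "real ^ 'm \<Rightarrow> real ^ 'n \<Rightarrow> real ^ 'n ^ 'm" where
  "outer a b = (\<chi> i j. a $ i * b $ j)"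

definition nonneg_vec :: "real ^ 'n \<Rightarrow> bool" where
  "nonneg_vec v \<longleftrightarrow> (\<forall>i. 0 \<le> v $ i)"

definition nonneg_mat :: "real ^ 'n ^ 'm \<Rightarrow> bool" where
  "nonneg_mat H \<longleftrightarrow> (\<forall>i j. 0 \<le> H $ i $ j)"

definition nd_decomp :: "real ^ 'b::{finite,order} ^ 'a::{finite,order} \<Rightarrow> nat \<Rightarrow> bool" where
  "nd_decomp T r \<longleftrightarrow> (\<exists>a b. (\<forall>i<r. a i \<in> order_cone \<and> b i \<in> order_cone)
       \<and> T = (\<Sum>i<r. outer (a i) (b i)))"

definition N_fin :: "(real ^ 'b::{finite,order} ^ 'a::{finite,order}) set" where
  "N_fin = {T. \<exists>r. nd_decomp T r}"

definition nd_rank :: "real ^ 'b::{finite,order} ^ 'a::{finite,order} \<Rightarrow> nat" where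
  "nd_rank T = (LEAST r. nd_decomp T r)"

definition nonneg_rank :: "real ^ 'n ^ 'm \<Rightarrow> nat" where
  "nonneg_rank H = (LEAST r. \<exists>c d. (\<forall>i<r. nonneg_vec (c i) \<and> nonneg_vec (d i))
       \<and> H = (\<Sum>i<r. outer (c i) (d i)))"

end

theory Submission imports Defs begin


lemma ray_aff_dim:
  fixes v :: "real ^ 'a"
  assumes "v \<noteq> 0" shows "aff_dim (ray_of v) = 1"
proof -
  have "{0, v} \<subseteq> ray_of v" unfolding ray_of_def by (auto intro: exI[of _ 0] exI[of _ 1])
  hence "aff_dim {0,v} \<le> aff_dim (ray_of v)" by (rule aff_dim_subset)
  moreover have "ray_of v \<subseteq> span {v}" unfolding ray_of_def by (auto intro: span_mul span_base)
  hence "aff_dim (ray_of v) \<le> aff_dim (span {v})" by (rule aff_dim_subset)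
  moreover have "aff_dim (span {v}) = 1" using assms by (simp add: aff_dim_subspace)
  ultimately show ?thesis using assms by simp
qed

lemma ray_convex: "convex (ray_of (v::'v::real_vector))"
  unfolding convex_def ray_of_def
proof (clarify)
  fix c1 c2 u w :: real
  assume "0 \<le> c1" "0 \<le> c2" "0 \<le> u" "0 \<le> w" "u + w = 1"
  thus "\<exists>c. u *\<^sub>R c1 *\<^sub>R v + w *\<^sub>R c2 *\<^sub>R v = c *\<^sub>R v \<and> 0 \<le> c"
    by (intro exI[of _ "u*c1 + w*c2"]) (auto simp: scaleR_add_left)
qed

definition ind :: "'a set \<Rightarrow> real ^ 'a" where
  "ind C = (\<chi> x. if x \<in> C then 1 else 0)"

lemma ind_ray_extremal:
  fixes C :: "'a::{finite,order} set"
  assumes x0: "x0 \<in> C"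
    and up: "\<And>x y. x \<in> C \<Longrightarrow> x \<le> y \<Longrightarrow> y \<in> C"
    and conn: "\<And>y. y \<in> C \<Longrightarrow> (x0, y) \<in> {(p,q). p \<in> C \<and> q \<in> C \<and> (p \<le> q \<or> q \<le> p)}\<^sup>*"
  shows "ray_of (ind C) \<in> extremal_rays"
proof -
  have ne: "ind C \<noteq> 0"
  proof
    assume "ind C = 0" hence "ind C $ x0 = 0" by simp
    thus False using x0 by (simp add: ind_def)
  qed
  have sub: "ray_of (ind C) \<subseteq> order_cone"
    unfolding ray_of_def order_cone_def ind_def using up by auto
  have face: "\<forall>a \<in> order_cone. \<forall>b \<in> order_cone. \<forall>x \<in> ray_of (ind C).
      x \<in> open_segment a b \<longrightarrow> a \<in> ray_of (ind C) \<and> b \<in> ray_of (ind C)"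
  proof (intro ballI impI)
    fix a b x assume a: "a \<in> order_cone" and b: "b \<in> order_cone" and "x \<in> ray_of (ind C)"
      and "x \<in> open_segment a b"
    then obtain c where c: "x = c *\<^sub>R ind C" unfolding ray_of_def by auto
    obtain u where u: "0 < u" "u < 1"
      and xab: "x = (1 - u) *\<^sub>R a + u *\<^sub>R b"
      using \<open>x \<in> open_segment a b\<close> unfolding in_segment by auto
    have comp: "(1 - u) * a $ y + u * b $ y = (if y \<in> C then c else 0)" for y
      using arg_cong[OF xab, of "\<lambda>v. v $ y"] c by (auto simp: ind_def split: if_splits)
    have an: "0 \<le> a $ y" "0 \<le> b $ y" for y using a b by (auto simp: order_cone_def)
    have am: "y \<le> z \<Longrightarrow> a $ y \<le> a $ z \<and> b $ y \<le> b $ z" for y z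
      using a b by (auto simp: order_cone_def)
    have out: "y \<notin> C \<Longrightarrow> a $ y = 0 \<and> b $ y = 0" for y
    proof -
      assume "y \<notin> C"
      hence "(1 - u) * a $ y + u * b $ y = 0" using comp[of y] by simp
      moreover have "0 \<le> (1 - u) * a $ y" "0 \<le> u * b $ y" using an[of y] u by auto
      ultimately show ?thesis using u by (smt (verit) mult_pos_pos an)
    qed
    have ins: "y \<in> C \<Longrightarrow> a $ y = a $ x0 \<and> b $ y = b $ x0" for y
    proof -
      assume "y \<in> C"
      from conn[OF this] show ?thesis
      proof (induction rule: rtrancl_induct)
        case base thus ?case by simp
      next
        case (step p q)
        hence pq: "p \<in> C" "q \<in> C" "p \<le> q \<or> q \<le> p" by auto
        have "a $ p = a $ q \<and> b $ p = b $ q"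
        proof -
          have e: "(1 - u) * a $ p + u * b $ p = (1 - u) * a $ q + u * b $ q"
            using comp[of p] comp[of q] pq by simp
          show ?thesis
          proof (cases "p \<le> q")
            case True
            from am[OF this] e u show ?thesis
              by (smt (verit) mult_left_mono mult_strict_left_mono)
          next
            case False
            hence "q \<le> p" using pq by auto
            from am[OF this] e u show ?thesis
              by (smt (verit) mult_left_mono mult_strict_left_mono)
          qed
        qed
        thus ?case using step by simp
      qed
    qed
    have "a = a $ x0 *\<^sub>R ind C"
      by (rule vec_eq_iff[THEN iffD2]) (auto simp: ind_def out ins)
    moreover have "b = b $ x0 *\<^sub>R ind C"
      by (rule vec_eq_iff[THEN iffD2]) (auto simp: ind_def out ins)
    ultimately show "a \<in> ray_of (ind C) \<and> b \<in> ray_of (ind C)"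
      unfolding ray_of_def using an by blast
  qed
  show ?thesis unfolding extremal_rays_def face_of_def
    using sub face ray_convex ray_aff_dim[OF ne] by blast
qed



lemma cone_gen:
  fixes V :: "real^'r^'a::{finite,order}"
  assumes hV: "\<And>F. F \<in> extremal_rays \<Longrightarrow> \<exists>k. F = ray_of (column k V)"
  shows "f \<in> order_cone \<Longrightarrow> \<exists>\<alpha>. nonneg_vec \<alpha> \<and> f = V *v \<alpha>"
proof (induction "card {x. f $ x \<noteq> 0}" arbitrary: f rule: less_induct)
  case less
  show ?case
  proof (cases "f = 0")
    case True
    thus ?thesis by (intro exI[of _ 0]) (auto simp: nonneg_vec_def)
  next
    case False
    then obtain x0 where "f $ x0 \<noteq> 0" by (auto simp: vec_eq_iff)
    have fn: "0 \<le> f $ y" for y using less.prems by (auto simp: order_cone_def)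
    have fm: "y \<le> z \<Longrightarrow> f $ y \<le> f $ z" for y z using less.prems by (auto simp: order_cone_def)
    define U where "U = {x. f $ x \<noteq> 0}"
    have Upos: "y \<in> U \<longleftrightarrow> 0 < f $ y" for y using fn[of y] by (auto simp: U_def)
    define RU where "RU = {(p,q). p \<in> U \<and> q \<in> U \<and> (p \<le> q \<or> q \<le> p)}"
    define C where "C = {y. (x0, y) \<in> RU\<^sup>*}"
    have x0C: "x0 \<in> C" unfolding C_def by simp
    have x0U: "x0 \<in> U" using \<open>f $ x0 \<noteq> 0\<close> by (simp add: U_def)
    have CU: "C \<subseteq> U"
    proof
      fix y assume "y \<in> C"
      hence "(x0, y) \<in> RU\<^sup>*" by (simp add: C_def)
      thus "y \<in> U" using x0U by (induction rule: rtrancl_induct) (auto simp: RU_def)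
    qed
    have closeC: "x \<in> U \<Longrightarrow> y \<in> C \<Longrightarrow> x \<le> y \<or> y \<le> x \<Longrightarrow> x \<in> C" for x y
    proof -
      assume "x \<in> U" "y \<in> C" "x \<le> y \<or> y \<le> x"
      hence "(y, x) \<in> RU" using CU by (auto simp: RU_def)
      thus "x \<in> C" using \<open>y \<in> C\<close> unfolding C_def by (auto intro: rtrancl_into_rtrancl)
    qed
    have up: "x \<in> C \<Longrightarrow> x \<le> y \<Longrightarrow> y \<in> C" for x y
    proof -
      assume "x \<in> C" "x \<le> y"
      hence "y \<in> U" using CU fm[of x y] Upos by force
      thus "y \<in> C" using closeC \<open>x \<in> C\<close> \<open>x \<le> y\<close> by blast
    qed
    have conn: "(x0, y) \<in> {(p,q). p \<in> C \<and> q \<in> C \<and> (p \<le> q \<or> q \<le> p)}\<^sup>*" if "y \<in> C" for y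
    proof -
      from that have "(x0, y) \<in> RU\<^sup>*" by (simp add: C_def)
      thus ?thesis
      proof (induction rule: rtrancl_induct)
        case base thus ?case by simp
      next
        case (step y z)
        have "y \<in> C" "z \<in> C" using step(1,2) unfolding C_def by (auto intro: rtrancl_into_rtrancl)
        hence "(y, z) \<in> {(p,q). p \<in> C \<and> q \<in> C \<and> (p \<le> q \<or> q \<le> p)}" using step(2) by (auto simp: RU_def)
        with step(3) show ?case by (rule rtrancl_into_rtrancl)
      qed
    qed
    have ext: "ray_of (ind C) \<in> extremal_rays"
      by (rule ind_ray_extremal[OF x0C up conn]) auto
    then obtain k where k: "ray_of (ind C) = ray_of (column k V)" using hV by blast
    have "ind C \<in> ray_of (ind C)" unfolding ray_of_def by (auto intro: exI[of _ 1])
    hence "ind C \<in> ray_of (column k V)" using k by simp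
    then obtain c where c: "ind C = c *\<^sub>R column k V" "0 \<le> c" unfolding ray_of_def by auto
    have finC: "finite C" by simp
    define t where "t = Min ((\<lambda>y. f $ y) ` C)"
    have tle: "y \<in> C \<Longrightarrow> t \<le> f $ y" for y unfolding t_def using finC by auto
    have "t \<in> (\<lambda>y. f $ y) ` C" unfolding t_def using finC x0C by (intro Min_in) auto
    then obtain y1 where y1: "y1 \<in> C" "f $ y1 = t" by auto
    have tpos: "0 < t" using y1 CU Upos by force
    define g where "g = f - t *\<^sub>R ind C"
    have gcomp: "g $ y = (if y \<in> C then f $ y - t else f $ y)" for y
      by (simp add: g_def ind_def)
    have gcone: "g \<in> order_cone"
      unfolding order_cone_def
    proof (intro CollectI conjI allI impI)
      fix y show "0 \<le> g $ y" using tle[of y] fn[of y] by (simp add: gcomp)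
    next
      fix x y :: 'a assume xy: "x \<le> y"
      show "g $ x \<le> g $ y"
      proof (cases "x \<in> C")
        case True
        hence "y \<in> C" using up xy by blast
        thus ?thesis using True fm[OF xy] by (simp add: gcomp)
      next
        case False
        show ?thesis
        proof (cases "y \<in> C")
          case True
          hence "x \<notin> U" using closeC False xy by blast
          hence "f $ x = 0" by (simp add: U_def)
          thus ?thesis using True False tle[of y] by (simp add: gcomp)
        next
          case F2: False
          thus ?thesis using False fm[OF xy] by (simp add: gcomp)
        qed
      qed
    qed
    have "{x. g $ x \<noteq> 0} \<subset> {x. f $ x \<noteq> 0}"
    proof
      show "{x. g $ x \<noteq> 0} \<subseteq> {x. f $ x \<noteq> 0}"
      proof
        fix y assume "y \<in> {x. g $ x \<noteq> 0}"
        hence "g $ y \<noteq> 0" by simp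
        thus "y \<in> {x. f $ x \<noteq> 0}"
        proof (cases "y \<in> C")
          case True thus ?thesis using CU Upos by fastforce
        qed (simp add: gcomp)
      qed
      have "g $ y1 = 0" using y1 by (simp add: gcomp)
      moreover have "f $ y1 \<noteq> 0" using tpos y1 by simp
      ultimately show "{x. g $ x \<noteq> 0} \<noteq> {x. f $ x \<noteq> 0}" by blast
    qed
    hence "card {x. g $ x \<noteq> 0} < card {x. f $ x \<noteq> 0}" by (intro psubset_card_mono) auto
    from less.hyps[OF this gcone] obtain \<beta> where \<beta>: "nonneg_vec \<beta>" "g = V *v \<beta>" by blast
    define \<alpha> where "\<alpha> = \<beta> + (t * c) *\<^sub>R axis k 1"
    have "nonneg_vec \<alpha>" using \<beta>(1) tpos c(2)
      by (auto simp: nonneg_vec_def \<alpha>_def axis_def)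
    moreover have "f = V *v \<alpha>"
    proof -
      have "f = g + t *\<^sub>R ind C" by (simp add: g_def)
      also have "\<dots> = V *v \<beta> + (t * c) *\<^sub>R column k V" using \<beta>(2) c(1) by simp
      also have "\<dots> = V *v \<alpha>"
        by (simp add: \<alpha>_def matrix_vector_right_distrib matrix_vector_mult_scaleR matrix_vector_mult_basis)
      finally show ?thesis .
    qed
    ultimately show ?thesis by blast
  qed
qed



lemma column_in_cone:
  fixes V :: "real^'r^'a::{finite,order}"
  assumes "ray_of (column k V) \<in> extremal_rays"
  shows "column k V \<in> order_cone"
proof -
  have "ray_of (column k V) \<subseteq> order_cone" using assms
    unfolding extremal_rays_def face_of_def by blast
  moreover have "column k V \<in> ray_of (column k V)" unfolding ray_of_def
    by (auto intro: exI[of _ 1])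
  ultimately show ?thesis by blast
qed

lemma mult_in_cone:
  fixes V :: "real^'r^'a::{finite,order}"
  assumes cols: "\<And>k. column k V \<in> order_cone" and a: "nonneg_vec \<alpha>"
  shows "V *v \<alpha> \<in> order_cone"
proof -
  have cn: "0 \<le> V $ x $ k" for x k using cols[of k] by (auto simp: order_cone_def column_def)
  have cm: "x \<le> y \<Longrightarrow> V $ x $ k \<le> V $ y $ k" for x y k
    using cols[of k] by (auto simp: order_cone_def column_def)
  have an: "0 \<le> \<alpha> $ k" for k using a by (simp add: nonneg_vec_def)
  show ?thesis unfolding order_cone_def matrix_vector_mult_def
    using cn cm an by (auto intro!: sum_nonneg sum_mono mult_right_mono)
qed

lemma outer_mult:
  fixes V1 :: "real^'r^'a" and V2 :: "real^'s^'b"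
  shows "V1 ** outer \<alpha> \<beta> ** transpose V2 = outer (V1 *v \<alpha>) (V2 *v \<beta>)"
  unfolding outer_def matrix_matrix_mult_def matrix_vector_mult_def transpose_def
  by (simp add: vec_eq_iff sum_distrib_left sum_distrib_right mult_ac)

lemma matrix_add_rdistrib':
  fixes A B :: "real^'r^'a" and C :: "real^'b^'r"
  shows "(A + B) ** C = A ** C + B ** C"
  by (simp add: matrix_matrix_mult_def vec_eq_iff sum.distrib distrib_right)

lemma sum_mult:
  fixes A :: "real^'r^'a" and B :: "real^'b^'s" and r :: nat and X :: "nat \<Rightarrow> real^'s^'r"
  shows "A ** (\<Sum>i<r. X i) ** B = (\<Sum>i<r. A ** X i ** B)"
  by (induction r) (simp_all add: matrix_add_ldistrib matrix_add_rdistrib')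

lemma nonneg_decomp_exists:
  fixes H :: "real^'s^'r"
  assumes "nonneg_mat H"
  shows "\<exists>(r::nat) c d. (\<forall>i<r. nonneg_vec (c i) \<and> nonneg_vec (d i)) \<and> H = (\<Sum>i<r. outer (c i) (d i))"
proof -
  obtain g :: "nat \<Rightarrow> 'r" where g: "bij_betw g {..<CARD('r)} UNIV"
    using ex_bij_betw_nat_finite[of "UNIV :: 'r set"] by (auto simp: atLeast0LessThan)
  have "(\<Sum>i<CARD('r). outer (axis (g i) 1) (H $ g i)) = (\<Sum>k\<in>UNIV. outer (axis k 1) (H $ k))"
    using sum.reindex_bij_betw[OF g, of "\<lambda>k. outer (axis k 1) (H $ k)"] by simp
  also have "\<dots> = H"
  proof -
    have e: "(if P then 1::real else 0) * h = (if P then h else 0)" for P h by simp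
    show ?thesis by (simp add: vec_eq_iff outer_def axis_def sum_component if_distribR e)
  qed
  finally have "H = (\<Sum>i<CARD('r). outer (axis (g i) 1) (H $ g i))" by simp
  moreover have "nonneg_vec (axis (g i) 1)" "nonneg_vec (H $ g i)" for i
    using assms by (auto simp: nonneg_vec_def nonneg_mat_def axis_def)
  ultimately have "(\<forall>i<CARD('r). nonneg_vec (axis (g i) (1::real)) \<and> nonneg_vec (H $ g i)) \<and>
      H = (\<Sum>i<CARD('r). outer (axis (g i) 1) (H $ g i))" by blast
  thus ?thesis
    by (intro exI[of _ "CARD('r)"] exI[of _ "\<lambda>i. axis (g i) (1::real)"] exI[of _ "\<lambda>i. H $ g i"])
qed



theorem lemma8:
  fixes V1 :: "real ^ 'r::finite ^ 'a::{finite,order}"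
    and V2 :: "real ^ 's::finite ^ 'b::{finite,order}"
    and T :: "real ^ 'b::{finite,order} ^ 'a::{finite,order}"
  assumes "bij_betw (\<lambda>k. ray_of (column k V1)) UNIV (extremal_rays :: (real ^ 'a::{finite,order}) set set)"
    and "bij_betw (\<lambda>k. ray_of (column k V2)) UNIV (extremal_rays :: (real ^ 'b::{finite,order}) set set)"
    and "T \<in> N_fin"
  shows "nd_rank T = (LEAST n. \<exists>H :: real ^ 's ^ 'r.
           nonneg_mat H \<and> T = V1 ** H ** transpose V2 \<and> nonneg_rank H = n)"
proof -
  have in1: "ray_of (column k V1) \<in> extremal_rays" for k
    using assms(1) by (auto simp: bij_betw_def)
  have in2: "ray_of (column k V2) \<in> extremal_rays" for k
    using assms(2) by (auto simp: bij_betw_def)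
  have s1: "\<exists>k. F = ray_of (column k V1)" if "F \<in> extremal_rays" for F
    using assms(1) that by (auto simp: bij_betw_def)
  have s2: "\<exists>k. F = ray_of (column k V2)" if "F \<in> extremal_rays" for F
    using assms(2) that by (auto simp: bij_betw_def)
  have c1: "column k V1 \<in> order_cone" for k by (rule column_in_cone[OF in1])
  have c2: "column k V2 \<in> order_cone" for k by (rule column_in_cone[OF in2])
  define S where "S = {n. \<exists>H :: real ^ 's ^ 'r.
           nonneg_mat H \<and> T = V1 ** H ** transpose V2 \<and> nonneg_rank H = n}"
  define m where "m = nd_rank T"
  have "\<exists>r. nd_decomp T r" using assms(3) by (simp add: N_fin_def)
  hence "nd_decomp T m" unfolding m_def nd_rank_def by (rule LeastI_ex)
  then obtain a b where ab: "\<forall>i<m. a i \<in> order_cone \<and> b i \<in> order_cone"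
    and Tab: "T = (\<Sum>i<m. outer (a i) (b i))" unfolding nd_decomp_def by blast
  have exa: "\<exists>v. nonneg_vec v \<and> a i = V1 *v v" if "i < m" for i
    using cone_gen[OF s1] ab that by blast
  define \<alpha> where "\<alpha> i = (SOME v. nonneg_vec v \<and> a i = V1 *v v)" for i
  have \<alpha>: "nonneg_vec (\<alpha> i) \<and> a i = V1 *v \<alpha> i" if "i < m" for i
    unfolding \<alpha>_def using someI_ex[OF exa[OF that]] .
  have exb: "\<exists>v. nonneg_vec v \<and> b i = V2 *v v" if "i < m" for i
    using cone_gen[OF s2] ab that by blast
  define \<beta> where "\<beta> i = (SOME v. nonneg_vec v \<and> b i = V2 *v v)" for i
  have \<beta>: "nonneg_vec (\<beta> i) \<and> b i = V2 *v \<beta> i" if "i < m" for i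
    unfolding \<beta>_def using someI_ex[OF exb[OF that]] .
  define H :: "real ^ 's ^ 'r" where "H = (\<Sum>i<m. outer (\<alpha> i) (\<beta> i))"
  have Hnn: "nonneg_mat H" unfolding H_def nonneg_mat_def
    using \<alpha> \<beta> by (auto simp: sum_component outer_def nonneg_vec_def intro!: sum_nonneg)
  have "V1 ** H ** transpose V2 = (\<Sum>i<m. V1 ** outer (\<alpha> i) (\<beta> i) ** transpose V2)"
    unfolding H_def by (rule sum_mult)
  also have "\<dots> = (\<Sum>i<m. outer (a i) (b i))"
    using \<alpha> \<beta> by (intro sum.cong) (auto simp: outer_mult)
  finally have THe: "T = V1 ** H ** transpose V2" using Tab by simp
  have "nonneg_rank H \<le> m" unfolding nonneg_rank_def
  proof (rule Least_le)
    show "\<exists>c d. (\<forall>i<m. nonneg_vec (c i) \<and> nonneg_vec (d i)) \<and> H = (\<Sum>i<m. outer (c i) (d i))"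
      by (rule exI[of _ \<alpha>], rule exI[of _ \<beta>]) (simp add: H_def \<alpha> \<beta>)
  qed
  hence "nonneg_rank H \<in> S" and "nonneg_rank H \<le> m" using Hnn THe by (auto simp: S_def)
  moreover have "Least (\<lambda>n. n \<in> S) \<le> nonneg_rank H" using \<open>nonneg_rank H \<in> S\<close> by (rule Least_le)
  ultimately have le1: "Least (\<lambda>n. n \<in> S) \<le> m" by linarith
  have "Least (\<lambda>n. n \<in> S) \<in> S" using \<open>nonneg_rank H \<in> S\<close> by (rule LeastI)
  then obtain H' :: "real ^ 's ^ 'r" where H': "nonneg_mat H'" "T = V1 ** H' ** transpose V2"
    "nonneg_rank H' = Least (\<lambda>n. n \<in> S)" unfolding S_def by auto
  define n where "n = nonneg_rank H'"
  have "\<exists>(r::nat) c d. (\<forall>i<r. nonneg_vec (c i) \<and> nonneg_vec (d i)) \<and> H' = (\<Sum>i<r. outer (c i) (d i))"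
    by (rule nonneg_decomp_exists[OF H'(1)])
  hence "\<exists>c d. (\<forall>i<n. nonneg_vec (c i) \<and> nonneg_vec (d i)) \<and> H' = (\<Sum>i<n. outer (c i) (d i))"
    unfolding n_def nonneg_rank_def by (rule LeastI_ex)
  then obtain c d where cd: "\<forall>i<n. nonneg_vec (c i) \<and> nonneg_vec (d i)"
    and H'cd: "H' = (\<Sum>i<n. outer (c i) (d i))" by blast
  have "T = V1 ** (\<Sum>i<n. outer (c i) (d i)) ** transpose V2"
    using H'(2) H'cd by simp
  also have "\<dots> = (\<Sum>i<n. V1 ** outer (c i) (d i) ** transpose V2)"
    by (rule sum_mult)
  also have "\<dots> = (\<Sum>i<n. outer (V1 *v c i) (V2 *v d i))" by (simp add: outer_mult)
  finally have Tn: "T = (\<Sum>i<n. outer (V1 *v c i) (V2 *v d i))" .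
  have "nd_decomp T n" unfolding nd_decomp_def
  proof (rule exI[of _ "\<lambda>i. V1 *v c i"], rule exI[of _ "\<lambda>i. V2 *v d i"], intro conjI allI impI)
    fix i assume "i < n"
    thus "V1 *v c i \<in> order_cone" "V2 *v d i \<in> order_cone"
      using cd mult_in_cone[OF c1] mult_in_cone[OF c2] by auto
  qed (rule Tn)
  hence "m \<le> n" unfolding m_def nd_rank_def by (rule Least_le)
  hence "m = Least (\<lambda>n. n \<in> S)" using le1 H'(3) n_def by simp
  thus ?thesis unfolding m_def S_def by simp
qed

end
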